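(* Let $\mu$ be a finite Borel measure on $\mathbb{R}^d$. Then the following hold. (i) Let $A$ be an affine subspace of $\mathbb{R}^d$ that contains at least two points. Then \[ \operatorname{supp}(\mu|_A) \subseteq \operatorname{cl}_A\Big( \bigcup_{\alpha \geq 0} \operatorname{bd}_A\big( D_\alpha(\mu) \cap A \big) \Big). \] In particular (taking $A = \mathbb{R}^d$), \[ \operatorname{supp}(\mu) \subseteq \operatorname{cl}\Big( \bigcup_{\alpha \geq 0} \operatorname{bd}\big( D_\alpha(\mu) \big) \Big). \] (ii) If $x \in \mathbb{R}^d$ is an atom of $\mu$ (i.e. $\mu(\{x\}) > 0$) and $D(x;\mu) = \alpha$, then $x$ is an extreme point of $D_\beta(\mu)$ for every $\beta \in (\alpha - \mu(\{x\}), \alpha]$. (iii) Let $x \in \mathbb{R}^d$ with $D(x;\mu) = \alpha$, let $z \in U_\alpha(\mu)$, and let $y \in \mathbb{R}^d$ be such that $x$ belongs to the open line segment $L(y,z)$ between $y$ and $z$. Then \[ D(y;\mu) \leq D(x;\mu) - \mu(\{x\}). \]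
   Context: A (closed) halfspace in $\mathbb{R}^d$ is a set $\{y \in \mathbb{R}^d : \langle y, u\rangle \leq c\}$ with $c \in \mathbb{R}$, $u \in \mathbb{R}^d\setminus\{0\}$. For $x \in \mathbb{R}^d$, let $\mathcal{H}(x)$ be the set of closed halfspaces whose boundary hyperplane contains $x$. For a finite Borel measure $\mu$ on $\mathbb{R}^d$, the halfspace (Tukey) depth of $x$ is $D(x;\mu) = \inf_{H \in \mathcal{H}(x)} \mu(H)$. For $\alpha \geq 0$, the central regions are $D_\alpha(\mu) = \{x \in \mathbb{R}^d : D(x;\mu) \geq \alpha\}$ and $U_\alpha(\mu) = \{x \in \mathbb{R}^d : D(x;\mu) > \alpha\}$. "Subspace" means affine subspace. For an affine subspace $A$ and $B \subseteq A$, $\operatorname{cl}_A(B)$ and $\operatorname{bd}_A(B)$ denote the closure and boundary of $B$ relative to $A$ (with its subspace topology); $\operatorname{cl}$, $\operatorname{bd}$ denote closure and boundary in $\mathbb{R}^d$. The restriction $\mu|_A$ is the Borel measure $\mu|_A(B) = \mu(B \cap A)$, and $\operatorname{supp}(\nu)$ is the smallest closed subset of $\mathbb{R}^d$ of full $\nu$-measure. For $x \neq y$, $L(x,y)$ denotes the open line segment between $x$ and $y$ (the segment without its endpoints). A point $z$ of a convex set $C$ is an extreme point of $C$ if $z$ is not the midpoint of any two distinct points of $C$ (equivalently $\{z\}$ is a face of $C$). *)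

theory Defs
  imports "HOL-Analysis.Analysis"
begin

definition hdepth :: "'a::euclidean_space measure \<Rightarrow> 'a \<Rightarrow> real" where
  "hdepth M x = (INF u \<in> {u. u \<noteq> 0}. measure M {y. y \<bullet> u \<le> x \<bullet> u})"

definition depth_region :: "'a::euclidean_space measure \<Rightarrow> real \<Rightarrow> 'a set" where
  "depth_region M \<alpha> = {x. hdepth M x \<ge> \<alpha>}"

definition depth_region_strict :: "'a::euclidean_space measure \<Rightarrow> real \<Rightarrow> 'a set" where
  "depth_region_strict M \<alpha> = {x. hdepth M x > \<alpha>}"

definition restr_measure :: "'a measure \<Rightarrow> 'a set \<Rightarrow> 'a measure" where
  "restr_measure M A = density M (indicator A)"

definition msupp :: "'a::topological_space measure \<Rightarrow> 'a set" where
  "msupp N = \<Inter> {C. closed C \<and> C \<in> sets N \<and> emeasure N (space N - C) = 0}"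

end

theory Submission
  imports Defs
begin

locale tk = finite_measure M for M :: "'a::euclidean_space measure" +
  assumes sb: "sets M = sets borel"
begin

lemma sp: "space M = UNIV"
  using sets_eq_imp_space_eq[OF sb] by simp

lemma closed_meas: "closed X \<Longrightarrow> X \<in> sets M"
  by (simp add: sb)

lemma open_meas: "open X \<Longrightarrow> X \<in> sets M"
  by (simp add: sb)

lemma hs_closed: "closed {y::'a. y \<bullet> u \<le> c}"
  by (intro closed_Collect_le continuous_intros)

lemma hs_meas: "{y::'a. y \<bullet> u \<le> c} \<in> sets M"
  by (rule closed_meas[OF hs_closed])

lemma ex_nonzero: "\<exists>u::'a. u \<noteq> 0"
  using nonzero_Basis SOME_Basis by blast

lemma hdepth_le: "u \<noteq> 0 \<Longrightarrow> hdepth M x \<le> measure M {y. y \<bullet> u \<le> x \<bullet> u}"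
  unfolding hdepth_def
  by (rule cINF_lower) (auto intro: bdd_belowI[where m=0])

lemma hdepth_ge: "(\<And>u. u \<noteq> 0 \<Longrightarrow> a \<le> measure M {y. y \<bullet> u \<le> x \<bullet> u}) \<Longrightarrow> a \<le> hdepth M x"
  unfolding hdepth_def
  using ex_nonzero by (intro cINF_greatest) auto

lemma hdepth_nonneg: "0 \<le> hdepth M x"
  by (rule hdepth_ge) simp

lemma hdepth_less: "hdepth M x < b \<Longrightarrow> \<exists>u. u \<noteq> 0 \<and> measure M {y. y \<bullet> u \<le> x \<bullet> u} < b"
  unfolding hdepth_def
  using ex_nonzero by (subst (asm) cINF_less_iff) (auto intro: bdd_belowI[where m=0])

lemma lex:
  assumes u: "u \<noteq> 0"
  shows "hdepth M s \<le> measure M {y. (y-s) \<bullet> u < 0 \<or> ((y-s) \<bullet> u = 0 \<and> (y-s) \<bullet> w \<le> 0)}"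
proof -
  define e where "e = norm u / (norm w + 1)"
  have e: "e > 0" using u unfolding e_def by (intro divide_pos_pos) (auto intro: add_nonneg_pos)
  define et where "et n = e / (real n + 1)" for n :: nat
  have et_pos: "et n > 0" for n using e by (simp add: et_def)
  have et_le: "et n \<le> e" for n using e by (simp add: et_def divide_le_eq)
  have et_mono: "m \<le> n \<Longrightarrow> et n \<le> et m" for m n
    using e by (simp add: et_def frac_le)
  have ew: "e * norm w < norm u"
  proof -
    have "e * norm w = norm u * (norm w / (norm w + 1))" by (simp add: e_def)
    also have "\<dots> < norm u * 1" using u by (intro mult_strict_left_mono) (auto simp: divide_less_eq add_nonneg_pos)
    finally show ?thesis by simp
  qed
  define un where "un n = u + et n *\<^sub>R w" for n
  have un_nz: "un n \<noteq> 0" for n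
  proof
    assume "un n = 0"
    hence "u = - (et n *\<^sub>R w)" by (simp add: un_def eq_neg_iff_add_eq_0)
    hence "norm u = et n * norm w" using et_pos[of n] by simp
    also have "\<dots> \<le> e * norm w" using et_le[of n] by (intro mult_right_mono) auto
    finally show False using ew by simp
  qed
  define H where "H n = {y. y \<bullet> un n \<le> s \<bullet> un n}" for n
  define B where "B N = (\<Union>n\<in>{N..}. H n)" for N
  have Hm: "H n \<in> sets M" for n unfolding H_def by (rule hs_meas)
  have Bm: "B N \<in> sets M" for N unfolding B_def using Hm by (intro sets.countable_UN'') auto
  have dec: "decseq B" unfolding B_def decseq_def by (intro allI impI UN_mono) auto
  have lim: "(\<lambda>N. measure M (B N)) \<longlonglongrightarrow> measure M (\<Inter>N. B N)"
    using Bm dec by (intro finite_Lim_measure_decseq) blast+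
  have "hdepth M s \<le> measure M (B N)" for N
  proof -
    have "hdepth M s \<le> measure M (H N)" unfolding H_def by (rule hdepth_le[OF un_nz])
    also have "\<dots> \<le> measure M (B N)" by (rule finite_measure_mono[OF _ Bm]) (auto simp: B_def)
    finally show ?thesis .
  qed
  hence "hdepth M s \<le> measure M (\<Inter>N. B N)"
    by (intro LIMSEQ_le_const[OF lim]) auto
  also have "\<dots> \<le> measure M {y. (y-s) \<bullet> u < 0 \<or> ((y-s) \<bullet> u = 0 \<and> (y-s) \<bullet> w \<le> 0)}"
  proof (rule finite_measure_mono)
    show "(\<Inter>N. B N) \<subseteq> {y. (y-s) \<bullet> u < 0 \<or> ((y-s) \<bullet> u = 0 \<and> (y-s) \<bullet> w \<le> 0)}"
    proof
      fix y assume y: "y \<in> (\<Inter>N. B N)"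
      define a where "a = (y-s) \<bullet> u"
      define b where "b = (y-s) \<bullet> w"
      have key: "\<exists>n\<ge>N. a + et n * b \<le> 0" for N
      proof -
        from y have "y \<in> B N" by auto
        then obtain n where "n \<ge> N" "y \<in> H n" unfolding B_def by auto
        hence "(y - s) \<bullet> un n \<le> 0" unfolding H_def by (simp add: inner_diff_left)
        thus ?thesis using \<open>n \<ge> N\<close> unfolding un_def a_def b_def
          by (auto simp: inner_add_right)
      qed
      have "\<not> a > 0"
      proof
        assume a: "a > 0"
        obtain N :: nat where N0: "e * \<bar>b\<bar> / a < real N"
          using reals_Archimedean2 by blast
        hence N: "e * \<bar>b\<bar> / a < real N + 1" by simp
        hence "e * \<bar>b\<bar> < a * (real N + 1)" using a by (simp add: divide_less_eq mult.commute)
        hence N': "et N * \<bar>b\<bar> < a" unfolding et_def by (simp add: divide_less_eq mult.commute)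
        obtain n where n: "n \<ge> N" "a + et n * b \<le> 0" using key by blast
        have "et n * \<bar>b\<bar> \<le> et N * \<bar>b\<bar>" using et_mono[OF n(1)] by (intro mult_right_mono) auto
        moreover have "et n * (- b) \<le> et n * \<bar>b\<bar>" using et_pos[of n]
          by (intro mult_left_mono) auto
        ultimately show False using n(2) N' by linarith
      qed
      moreover have "a = 0 \<Longrightarrow> b \<le> 0"
      proof -
        assume "a = 0"
        obtain n where "a + et n * b \<le> 0" using key by blast
        thus "b \<le> 0" using \<open>a = 0\<close> et_pos[of n] by (simp add: mult_le_0_iff)
      qed
      ultimately have "a < 0 \<or> (a = 0 \<and> b \<le> 0)" by linarith
      thus "y \<in> {y. (y-s) \<bullet> u < 0 \<or> ((y-s) \<bullet> u = 0 \<and> (y-s) \<bullet> w \<le> 0)}"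
        unfolding a_def b_def by simp
    qed
  next
    have "{y. (y-s) \<bullet> u < 0 \<or> ((y-s) \<bullet> u = 0 \<and> (y-s) \<bullet> w \<le> 0)} =
       {y. (y-s) \<bullet> u < 0} \<union> ({y. (y-s) \<bullet> u = 0} \<inter> {y. (y-s) \<bullet> w \<le> 0})" by auto
    moreover have "open {y::'a. (y-s) \<bullet> u < 0}" by (intro open_Collect_less continuous_intros)
    moreover have "closed {y::'a. (y-s) \<bullet> u = 0}" by (intro closed_Collect_eq continuous_intros)
    moreover have "closed {y::'a. (y-s) \<bullet> w \<le> 0}" by (intro closed_Collect_le continuous_intros)
    ultimately show "{y. (y-s) \<bullet> u < 0 \<or> ((y-s) \<bullet> u = 0 \<and> (y-s) \<bullet> w \<le> 0)} \<in> sets M"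
      using open_meas closed_meas sets.Int sets.Un by simp
  qed
  finally show ?thesis .
qed


lemma lex_sub:
  assumes u: "u \<noteq> 0" and px: "(p - x) \<bullet> u \<le> 0" and pne: "p \<noteq> x"
  shows "hdepth M p \<le> measure M {y. y \<bullet> u \<le> x \<bullet> u} - measure M {x}"
proof -
  have "hdepth M p \<le> measure M {y. (y-p) \<bullet> u < 0 \<or> ((y-p) \<bullet> u = 0 \<and> (y-p) \<bullet> (x - p) \<le> 0)}"
    by (rule lex[OF u])
  also have "\<dots> \<le> measure M ({y. y \<bullet> u \<le> x \<bullet> u} - {x})"
  proof (rule finite_measure_mono)
    show "{y. (y-p) \<bullet> u < 0 \<or> ((y-p) \<bullet> u = 0 \<and> (y-p) \<bullet> (x - p) \<le> 0)} \<subseteq> {y. y \<bullet> u \<le> x \<bullet> u} - {x}"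
    proof
      fix y assume y: "y \<in> {y. (y-p) \<bullet> u < 0 \<or> ((y-p) \<bullet> u = 0 \<and> (y-p) \<bullet> (x - p) \<le> 0)}"
      hence "(y - p) \<bullet> u \<le> 0" by auto
      hence "y \<bullet> u \<le> x \<bullet> u" using px by (simp add: inner_diff_left)
      moreover have "y \<noteq> x"
      proof
        assume "y = x"
        have h: "(x - p) \<bullet> u = - ((p - x) \<bullet> u)" by (simp add: inner_diff_left)
        from y \<open>y = x\<close> have "(x - p) \<bullet> u < 0 \<or> ((x - p) \<bullet> u = 0 \<and> (x - p) \<bullet> (x - p) \<le> 0)" by simp
        with h px have "(x - p) \<bullet> (x - p) \<le> 0" by linarith
        thus False using pne by (metis inner_eq_zero_iff inner_ge_zero order_antisym right_minus_eq)
      qed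
      ultimately show "y \<in> {y. y \<bullet> u \<le> x \<bullet> u} - {x}" by auto
    qed
    show "{y. y \<bullet> u \<le> x \<bullet> u} - {x} \<in> sets M" using hs_meas closed_meas by auto
  qed
  also have "\<dots> = measure M {y. y \<bullet> u \<le> x \<bullet> u} - measure M {x}"
    using hs_meas closed_meas by (intro finite_measure_Diff) auto
  finally show ?thesis .
qed

lemma part3:
  assumes z: "z \<in> depth_region_strict M (hdepth M x)" and x: "x \<in> open_segment y z"
  shows "hdepth M y \<le> hdepth M x - measure M {x}"
proof (rule ccontr)
  assume "\<not> ?thesis"
  hence hy: "hdepth M x < hdepth M y + measure M {x}" by simp
  have hz: "hdepth M x < hdepth M z" using z by (simp add: depth_region_strict_def)
  obtain u where u: "u \<noteq> 0" "measure M {y. y \<bullet> u \<le> x \<bullet> u} < min (hdepth M z) (hdepth M y + measure M {x})"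
    using hdepth_less[of x "min (hdepth M z) (hdepth M y + measure M {x})"] hy hz by auto
  from x obtain t where t: "0 < t" "t < 1" "x = (1 - t) *\<^sub>R y + t *\<^sub>R z" "y \<noteq> z"
    by (auto simp: in_segment)
  have yx: "y - x = - t *\<^sub>R (z - y)" using t by (simp add: algebra_simps)
  have zx: "z - x = (1 - t) *\<^sub>R (z - y)" using t by (simp add: algebra_simps)
  show False
  proof (cases "(z - y) \<bullet> u \<le> 0")
    case True
    hence "(z - x) \<bullet> u \<le> 0" using t(1,2) by (simp add: zx mult_nonneg_nonpos)
    hence "{y. y \<bullet> u \<le> z \<bullet> u} \<subseteq> {y. y \<bullet> u \<le> x \<bullet> u}" by (auto simp: inner_diff_left)
    hence "measure M {y. y \<bullet> u \<le> z \<bullet> u} \<le> measure M {y. y \<bullet> u \<le> x \<bullet> u}"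
      by (intro finite_measure_mono hs_meas)
    moreover have "hdepth M z \<le> measure M {y. y \<bullet> u \<le> z \<bullet> u}" by (rule hdepth_le[OF u(1)])
    ultimately show False using u(2) by linarith
  next
    case False
    hence "(y - x) \<bullet> u \<le> 0" using t(1,2) by (simp add: yx mult_nonneg_nonpos)
    moreover have "y \<noteq> x" using x by (auto simp: open_segment_def)
    ultimately have "hdepth M y \<le> measure M {y. y \<bullet> u \<le> x \<bullet> u} - measure M {x}"
      by (intro lex_sub u(1))
    thus False using u(2) by linarith
  qed
qed

lemma part2:
  assumes m: "measure M {x} > 0" and b: "hdepth M x - measure M {x} < \<beta>" "\<beta> \<le> hdepth M x"
  shows "x extreme_point_of (depth_region M \<beta>)"
  unfolding extreme_point_of_def
proof (intro conjI ballI)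
  show "x \<in> depth_region M \<beta>" using b by (simp add: depth_region_def)
  fix a c assume a: "a \<in> depth_region M \<beta>" and c: "c \<in> depth_region M \<beta>"
  show "x \<notin> open_segment a c"
  proof
    assume x: "x \<in> open_segment a c"
    obtain u where u: "u \<noteq> 0" "measure M {y. y \<bullet> u \<le> x \<bullet> u} < \<beta> + measure M {x}"
      using hdepth_less[of x "\<beta> + measure M {x}"] b by auto
    from x obtain t where t: "0 < t" "t < 1" "x = (1 - t) *\<^sub>R a + t *\<^sub>R c" "a \<noteq> c"
      by (auto simp: in_segment)
    have ax: "a - x = - t *\<^sub>R (c - a)" using t by (simp add: algebra_simps)
    have cx: "c - x = (1 - t) *\<^sub>R (c - a)" using t by (simp add: algebra_simps)
    have ane: "a \<noteq> x" "c \<noteq> x" using x by (auto simp: open_segment_def)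
    obtain p where p: "p \<in> depth_region M \<beta>" "(p - x) \<bullet> u \<le> 0" "p \<noteq> x"
    proof (cases "(c - a) \<bullet> u \<le> 0")
      case True
      hence "(c - x) \<bullet> u \<le> 0" using t(1,2) by (simp add: cx mult_nonneg_nonpos)
      thus ?thesis using that c ane by blast
    next
      case False
      hence "(a - x) \<bullet> u \<le> 0" using t(1,2) by (simp add: ax mult_nonneg_nonpos)
      thus ?thesis using that a ane by blast
    qed
    have "hdepth M p \<le> measure M {y. y \<bullet> u \<le> x \<bullet> u} - measure M {x}"
      by (rule lex_sub[OF u(1) p(2,3)])
    moreover have "\<beta> \<le> hdepth M p" using p(1) by (simp add: depth_region_def)
    ultimately show False using u(2) by linarith
  qed
qed


lemma meas_borel: "(f \<in> borel_measurable M) \<longleftrightarrow> (f \<in> borel_measurable borel)"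
  by (metis measurable_cong_sets sb)

lemma intK:
  assumes K: "K \<in> sets M" and R: "K \<subseteq> cball x0 R"
  shows "integrable M (\<lambda>y. indicator K y *\<^sub>R y)"
proof (rule integrable_const_bound[where B = "norm x0 + \<bar>R\<bar>"])
  show "AE y in M. norm (indicator K y *\<^sub>R y) \<le> norm x0 + \<bar>R\<bar>"
  proof (rule AE_I2)
    fix y
    show "norm (indicator K y *\<^sub>R y) \<le> norm x0 + \<bar>R\<bar>"
    proof (cases "y \<in> K")
      case True
      hence "dist x0 y \<le> R" using R by auto
      hence "norm y \<le> norm x0 + R" by (metis dist_norm norm_minus_commute norm_triangle_sub order_trans add_left_mono)
      thus ?thesis using True by simp
    qed simp
  qed
  have "K \<in> sets borel" using K sb by simp
  hence "(\<lambda>y. indicator K y *\<^sub>R y) \<in> borel_measurable borel" by measurable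
  thus "(\<lambda>y. indicator K y *\<^sub>R y) \<in> borel_measurable M" by (simp add: meas_borel)
qed

lemma intKa:
  assumes K: "K \<in> sets M" and R: "K \<subseteq> cball x0 R"
  shows "integrable M (\<lambda>y. indicator K y * (a \<bullet> y))"
    "(\<integral>y. indicator K y * (a \<bullet> y) \<partial>M) = (\<integral>y. indicator K y *\<^sub>R y \<partial>M) \<bullet> a"
proof -
  have eq: "(\<lambda>y. indicator K y * (a \<bullet> y)) = (\<lambda>y. (indicator K y *\<^sub>R y) \<bullet> a)"
    by (auto simp: inner_commute)
  show "integrable M (\<lambda>y. indicator K y * (a \<bullet> y))"
    unfolding eq using intK[OF K R] by (rule integrable_inner_left)
  show "(\<integral>y. indicator K y * (a \<bullet> y) \<partial>M) = (\<integral>y. indicator K y *\<^sub>R y \<partial>M) \<bullet> a"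
    unfolding eq using intK[OF K R] by (rule integral_inner_left)
qed

lemma intKc:
  assumes K: "K \<in> sets M"
  shows "integrable M (\<lambda>y. indicator K y * b)"
    "(\<integral>y. indicator K y * b \<partial>M) = b * measure M K"
proof -
  have i: "integrable M (indicator K :: 'a \<Rightarrow> real)"
    using K by (intro integrable_real_indicator) (auto simp: emeasure_eq_measure)
  show "integrable M (\<lambda>y. indicator K y * b)" using i by (rule integrable_mult_left)
  show "(\<integral>y. indicator K y * b \<partial>M) = b * measure M K"
    using K by (simp add: sp)
qed


end

lemma decomp:
  fixes S :: "'a::euclidean_space set"
  assumes S: "subspace S" and w0: "w0 \<in> S" "norm w0 = 1"
  shows "\<exists>w l. w \<in> S \<and> norm w = 1 \<and> l \<ge> 0 \<and> (\<forall>d\<in>S. d \<bullet> u = l * (d \<bullet> w))"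
proof -
  obtain v z where v: "v \<in> span S" and z: "\<And>w. w \<in> span S \<Longrightarrow> orthogonal z w" and u: "u = v + z"
    by (rule orthogonal_subspace_decomp_exists[of S u, where thesis=thesis]) blast
  have sp: "span S = S" using S by (simp add: span_eq_iff)
  have dz: "d \<bullet> z = 0" if "d \<in> S" for d using z[of d] that sp by (simp add: orthogonal_def inner_commute)
  show ?thesis
  proof (cases "v = 0")
    case True
    show ?thesis using w0 dz True u by (intro exI[of _ w0] exI[of _ 0]) auto
  next
    case False
    have vS: "v \<in> S" using v sp by simp
    show ?thesis
    proof (intro exI[of _ "(1 / norm v) *\<^sub>R v"] exI[of _ "norm v"] conjI ballI)
      show "(1 / norm v) *\<^sub>R v \<in> S" using vS S by (simp add: subspace_scale)
      show "norm ((1 / norm v) *\<^sub>R v) = 1" using False by simp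
      show "0 \<le> norm v" by simp
      fix d assume d: "d \<in> S"
      show "d \<bullet> u = norm v * (d \<bullet> ((1 / norm v) *\<^sub>R v))"
        using False dz[OF d] by (simp add: u inner_add_right)
    qed
  qed
qed


context tk begin

lemma open_hs_meas: "{y::'a. (y - c) \<bullet> w < b} \<in> sets M"
  by (intro open_meas open_Collect_less continuous_intros)

lemma lexset_meas: "{y::'a. (y-s) \<bullet> u < 0 \<or> ((y-s) \<bullet> u = 0 \<and> (y-s) \<bullet> w \<le> 0)} \<in> sets M"
proof -
  have "{y. (y-s) \<bullet> u < 0 \<or> ((y-s) \<bullet> u = 0 \<and> (y-s) \<bullet> w \<le> 0)} =
     {y. (y-s) \<bullet> u < 0} \<union> ({y. (y-s) \<bullet> u = 0} \<inter> {y. (y-s) \<bullet> w \<le> 0})" by auto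
  moreover have "open {y::'a. (y-s) \<bullet> u < 0}" by (intro open_Collect_less continuous_intros)
  moreover have "closed {y::'a. (y-s) \<bullet> u = 0}" by (intro closed_Collect_eq continuous_intros)
  moreover have "closed {y::'a. (y-s) \<bullet> w \<le> 0}" by (intro closed_Collect_le continuous_intros)
  ultimately show ?thesis
    using open_meas closed_meas sets.Int sets.Un by simp
qed

lemma centroid:
  assumes K: "K \<in> sets M" and KC: "K \<subseteq> C" and C: "convex C" "closed C" "C \<subseteq> cball x0 R"
    and Kpos: "measure M K > 0"
  obtains c where "c \<in> C" "\<And>a. (\<integral>y. indicator K y * (a \<bullet> y) \<partial>M) = measure M K * (a \<bullet> c)"
proof -
  have KR: "K \<subseteq> cball x0 R" using KC C by auto
  define I where "I = (\<integral>y. indicator K y *\<^sub>R y \<partial>M)"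
  define c where "c = (1 / measure M K) *\<^sub>R I"
  have ident: "(\<integral>y. indicator K y * (a \<bullet> y) \<partial>M) = measure M K * (a \<bullet> c)" for a
    using intKa(2)[OF K KR, of a] Kpos by (simp add: c_def I_def inner_commute)
  have "c \<in> C"
  proof (rule ccontr)
    assume "c \<notin> C"
    then obtain a b where ab: "a \<bullet> c < b" "\<forall>x\<in>C. b < a \<bullet> x"
      using separating_hyperplane_closed_point[OF C(1,2)] by blast
    have "(\<integral>y. indicator K y * b \<partial>M) \<le> (\<integral>y. indicator K y * (a \<bullet> y) \<partial>M)"
    proof (rule integral_mono)
      show "integrable M (\<lambda>y. indicator K y * b)" by (rule intKc(1)[OF K])
      show "integrable M (\<lambda>y. indicator K y * (a \<bullet> y))" by (rule intKa(1)[OF K KR])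
      fix y show "indicator K y * b \<le> indicator K y * (a \<bullet> y)"
        using ab(2) KC by (cases "y \<in> K") (auto intro: less_imp_le)
    qed
    hence "b * measure M K \<le> measure M K * (a \<bullet> c)" by (simp add: sp ident mult.commute)
    thus False using ab(1) Kpos by (simp add: mult.commute)
  qed
  thus ?thesis using that ident by blast
qed


lemma hyp_meas: "{y::'a. w \<bullet> y = b} \<in> sets M"
  by (intro closed_meas closed_Collect_eq continuous_intros)

lemma pos_side:
  assumes K: "K \<in> sets M" and KR: "K \<subseteq> cball x0 R" and Kpos: "measure M K > 0"
    and ident: "\<And>a. (\<integral>y. indicator K y * (a \<bullet> y) \<partial>M) = measure M K * (a \<bullet> c)"
    and hyp: "measure M (K \<inter> {y. w \<bullet> y = w \<bullet> c}) = 0"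
  shows "measure M (K \<inter> {y. (y - c) \<bullet> w < 0}) > 0"
proof (rule ccontr)
  assume "\<not> ?thesis"
  hence N0: "measure M (K \<inter> {y. (y - c) \<bullet> w < 0}) = 0" using measure_nonneg[of M] by (meson not_less order_antisym)
  have Nm: "K \<inter> {y. (y - c) \<bullet> w < 0} \<in> sets M" using K open_hs_meas by auto
  have Nnull: "K \<inter> {y. (y - c) \<bullet> w < 0} \<in> null_sets M"
    using N0 Nm by (intro null_setsI) (simp add: emeasure_eq_measure)
  define g where "g y = indicator K y * (w \<bullet> y) - indicator K y * (w \<bullet> c)" for y
  have gint: "integrable M g" unfolding g_def
    using Bochner_Integration.integrable_diff[OF intKa(1)[OF K KR, of w] intKc(1)[OF K, of "w \<bullet> c"]] by simp
  have g0: "integral\<^sup>L M g = 0" unfolding g_def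
    using intKa(1)[OF K KR] intKc[OF K] ident[of w] by (simp add: integral_diff mult.commute sp)
  have gnn: "AE y in M. 0 \<le> g y"
  proof (rule AE_I'[OF Nnull])
    show "{y \<in> space M. \<not> 0 \<le> g y} \<subseteq> K \<inter> {y. (y - c) \<bullet> w < 0}"
    proof
      fix y assume "y \<in> {y \<in> space M. \<not> 0 \<le> g y}"
      hence yK: "y \<in> K" and "w \<bullet> y < w \<bullet> c" by (cases "y \<in> K"; simp add: g_def)+
      hence "(y - c) \<bullet> w < 0" by (simp add: inner_diff_left inner_commute[of y w] inner_commute[of c w])
      thus "y \<in> K \<inter> {y. (y - c) \<bullet> w < 0}" using yK by simp
    qed
  qed
  have "AE y in M. g y = 0" using integral_nonneg_eq_0_iff_AE[OF gint gnn] g0 by simp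
  then obtain N where N: "{y \<in> space M. \<not> g y = 0} \<subseteq> N" "emeasure M N = 0" "N \<in> sets M"
    by (rule AE_E)
  have "K \<subseteq> N \<union> (K \<inter> {y. w \<bullet> y = w \<bullet> c})"
    using N(1) by (auto simp: g_def sp indicator_def)
  hence "measure M K \<le> measure M (N \<union> (K \<inter> {y. w \<bullet> y = w \<bullet> c}))"
    using N(3) K hyp_meas by (intro finite_measure_mono) auto
  also have "\<dots> \<le> measure M N + measure M (K \<inter> {y. w \<bullet> y = w \<bullet> c})"
    using N(3) K hyp_meas by (intro measure_Un_le) auto
  also have "\<dots> = 0" using N(2) hyp by (simp add: emeasure_eq_measure)
  finally show False using Kpos by simp
qed


lemma unif:
  assumes K: "K \<in> sets M" and KD: "K \<subseteq> ball c D" and Sph: "compact Sph"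
    and pos: "\<And>w. w \<in> Sph \<Longrightarrow> measure M (K \<inter> {y. (y - c) \<bullet> w < 0}) > 0"
  shows "\<exists>\<kappa>>0. \<forall>w\<in>Sph. measure M (K \<inter> {y. (y - c) \<bullet> w < 0}) \<ge> \<kappa>"
proof -
  have loc: "\<exists>d>0. \<exists>k>0. \<forall>w'. dist w w' < d \<longrightarrow> measure M (K \<inter> {y. (y - c) \<bullet> w' < 0}) \<ge> k"
    if w: "w \<in> Sph" for w
  proof -
    have "\<exists>n. measure M (K \<inter> {y. (y - c) \<bullet> w < - inverse (real (Suc n))}) > 0"
    proof (rule ccontr)
      assume "\<not> ?thesis"
      hence z: "measure M (K \<inter> {y. (y - c) \<bullet> w < - inverse (real (Suc n))}) = 0" for n
        using measure_nonneg[of M] by (meson not_less order_antisym)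
      have nul: "K \<inter> {y. (y - c) \<bullet> w < - inverse (real (Suc n))} \<in> null_sets M" for n
        using z[of n] K open_hs_meas by (intro null_setsI) (auto simp: emeasure_eq_measure)
      have "(\<Union>n. K \<inter> {y. (y - c) \<bullet> w < - inverse (real (Suc n))}) = K \<inter> {y. (y - c) \<bullet> w < 0}"
      proof (intro equalityI subsetI)
        fix y assume "y \<in> K \<inter> {y. (y - c) \<bullet> w < 0}"
        then obtain n where "inverse (real (Suc n)) < - ((y - c) \<bullet> w)" "y \<in> K"
          using reals_Archimedean[of "- ((y - c) \<bullet> w)"] by auto
        hence "y \<in> K \<inter> {y. (y - c) \<bullet> w < - inverse (real (Suc n))}" by simp
        thus "y \<in> (\<Union>n. K \<inter> {y. (y - c) \<bullet> w < - inverse (real (Suc n))})" by auto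
      next
        fix y assume "y \<in> (\<Union>n. K \<inter> {y. (y - c) \<bullet> w < - inverse (real (Suc n))})"
        then obtain n where "y \<in> K" "(y - c) \<bullet> w < - inverse (real (Suc n))" by auto
        moreover have "0 < inverse (real (Suc n))" by simp
        ultimately have "(y - c) \<bullet> w < 0" by linarith
        thus "y \<in> K \<inter> {y. (y - c) \<bullet> w < 0}" using \<open>y \<in> K\<close> by simp
      qed
      moreover have "(\<Union>n. K \<inter> {y. (y - c) \<bullet> w < - inverse (real (Suc n))}) \<in> null_sets M"
        using nul by (intro null_sets_UN) auto
      ultimately have "measure M (K \<inter> {y. (y - c) \<bullet> w < 0}) = 0"
        by (metis measure_eq_0_null_sets)
      thus False using pos[OF w] by simp
    qed
    then obtain n where n: "measure M (K \<inter> {y. (y - c) \<bullet> w < - inverse (real (Suc n))}) > 0" by blast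
    have D: "D > 0"
    proof -
      have "K \<noteq> {}" using n by auto
      then obtain y where "y \<in> K" by auto
      hence "dist c y < D" using KD by auto
      thus ?thesis by (meson zero_le_dist le_less_trans)
    qed
    define d where "d = inverse (real (Suc n)) / D"
    have d: "d > 0" using D by (simp add: d_def)
    have "\<forall>w'. dist w w' < d \<longrightarrow> measure M (K \<inter> {y. (y - c) \<bullet> w < - inverse (real (Suc n))}) \<le> measure M (K \<inter> {y. (y - c) \<bullet> w' < 0})"
    proof (intro allI impI)
      fix w' assume dw: "dist w w' < d"
      show "measure M (K \<inter> {y. (y - c) \<bullet> w < - inverse (real (Suc n))}) \<le> measure M (K \<inter> {y. (y - c) \<bullet> w' < 0})"
      proof (rule finite_measure_mono)
        show "K \<inter> {y. (y - c) \<bullet> w' < 0} \<in> sets M" using K open_hs_meas by auto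
        show "K \<inter> {y. (y - c) \<bullet> w < - inverse (real (Suc n))} \<subseteq> K \<inter> {y. (y - c) \<bullet> w' < 0}"
        proof safe
          fix y assume y: "y \<in> K" "(y - c) \<bullet> w < - inverse (real (Suc n))"
          have ny: "norm (y - c) < D" using KD y(1) by (auto simp: dist_norm norm_minus_commute)
          have "(y - c) \<bullet> (w' - w) \<le> norm (y - c) * norm (w' - w)" by (rule norm_cauchy_schwarz)
          also have "\<dots> \<le> D * norm (w' - w)" using ny by (intro mult_right_mono) auto
          also have "\<dots> < D * d" using dw D by (intro mult_strict_left_mono) (auto simp: dist_norm norm_minus_commute)
          also have "\<dots> = inverse (real (Suc n))" using D by (simp add: d_def)
          finally have "(y - c) \<bullet> (w' - w) < inverse (real (Suc n))" .
          thus "(y - c) \<bullet> w' < 0" using y(2) by (simp add: inner_diff_right)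
        qed
      qed
    qed
    thus ?thesis using d n by blast
  qed
  then obtain d k where dk: "\<And>w. w \<in> Sph \<Longrightarrow> d w > 0 \<and> k w > 0 \<and>
      (\<forall>w'. dist w w' < d w \<longrightarrow> measure M (K \<inter> {y. (y - c) \<bullet> w' < 0}) \<ge> k w)"
    by metis
  obtain T where T: "T \<subseteq> Sph" "finite T" "Sph \<subseteq> (\<Union>w\<in>T. ball w (d w))"
  proof (rule compactE_image[OF Sph, of Sph "\<lambda>w. ball w (d w)"])
    show "Sph \<subseteq> (\<Union>w\<in>Sph. ball w (d w))" using dk by force
  qed auto
  define \<kappa> where "\<kappa> = Min (insert 1 (k ` T))"
  have "\<kappa> > 0" unfolding \<kappa>_def using T dk by (subst Min_gr_iff) auto
  moreover have "\<forall>w\<in>Sph. measure M (K \<inter> {y. (y - c) \<bullet> w < 0}) \<ge> \<kappa>"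
  proof
    fix w' assume "w' \<in> Sph"
    then obtain w where w: "w \<in> T" "dist w w' < d w" using T(3) by auto
    hence "measure M (K \<inter> {y. (y - c) \<bullet> w' < 0}) \<ge> k w" using dk T(1) by blast
    moreover have "\<kappa> \<le> k w" unfolding \<kappa>_def using T w by (intro Min_le) auto
    ultimately show "measure M (K \<inter> {y. (y - c) \<bullet> w' < 0}) \<ge> \<kappa>" by linarith
  qed
  ultimately show ?thesis by blast
qed


lemma core:
  assumes A: "affine A" and pq: "p \<in> A" "q \<in> A" "p \<noteq> q" and x0: "x0 \<in> A" and r: "r > 0"
    and const: "\<And>y. y \<in> A \<Longrightarrow> y \<in> ball x0 r \<Longrightarrow> hdepth M y = \<alpha>"
  shows "measure M (A \<inter> ball x0 (r/4)) = 0"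
proof (rule ccontr)
  define \<rho> where "\<rho> = r / 4"
  have \<rho>: "\<rho> > 0" using r by (simp add: \<rho>_def)
  assume "measure M (A \<inter> ball x0 (r/4)) \<noteq> 0"
  hence pos: "measure M (A \<inter> ball x0 \<rho>) > 0" unfolding \<rho>_def
    using measure_nonneg[of M "A \<inter> ball x0 (r/4)"] by linarith
  define F where "F E \<longleftrightarrow> affine E \<and> E \<subseteq> A \<and> measure M (E \<inter> ball x0 \<rho>) > 0" for E
  have "F A" using A pos by (simp add: F_def)
  then obtain E where FE: "F E" and Emin: "\<And>E'. F E' \<Longrightarrow> nat (aff_dim E) \<le> nat (aff_dim E')"
    using ex_has_least_nat[of F A "\<lambda>E. nat (aff_dim E)"] by blast
  have Eaff: "affine E" and EA: "E \<subseteq> A" and Kpos: "measure M (E \<inter> ball x0 \<rho>) > 0"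
    using FE by (auto simp: F_def)
  define K where "K = E \<inter> ball x0 \<rho>"
  have Eclosed: "closed E" using Eaff by (rule affine_closed)
  have Km: "K \<in> sets M" unfolding K_def using Eclosed by (intro sets.Int closed_meas open_meas) auto
  have Kpos': "measure M K > 0" using Kpos by (simp add: K_def)
  have hyp0: "measure M (K \<inter> {y. w \<bullet> y = w \<bullet> c}) = 0"
    if c: "c \<in> E" and cw: "c + w \<in> E" and w: "w \<noteq> 0" for c w
  proof (rule ccontr)
    let ?F = "E \<inter> {y. w \<bullet> y = w \<bullet> c}"
    assume "measure M (K \<inter> {y. w \<bullet> y = w \<bullet> c}) \<noteq> 0"
    moreover have "K \<inter> {y. w \<bullet> y = w \<bullet> c} = ?F \<inter> ball x0 \<rho>" by (auto simp: K_def)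
    ultimately have "measure M (?F \<inter> ball x0 \<rho>) > 0"
      by (metis measure_nonneg order_le_less)
    moreover have "affine ?F" using Eaff by (intro affine_Int affine_hyperplane)
    ultimately have "F ?F" using EA by (auto simp: F_def)
    hence le: "nat (aff_dim E) \<le> nat (aff_dim ?F)" by (rule Emin)
    have ne: "?F \<noteq> {}" using c by auto
    have nsub: "\<not> E \<subseteq> {y. w \<bullet> y = w \<bullet> c}"
    proof
      assume "E \<subseteq> {y. w \<bullet> y = w \<bullet> c}"
      hence "w \<bullet> (c + w) = w \<bullet> c" using cw by auto
      thus False using w by (simp add: inner_add_right)
    qed
    have dim: "aff_dim ?F = aff_dim E - 1"
      using aff_dim_affine_Int_hyperplane[OF Eaff, of w "w \<bullet> c"] ne nsub by simp
    have ge: "\<not> aff_dim ?F < 0" using ne aff_dim_negative_iff[of ?F] by simp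
    show False using le dim ge by linarith
  qed
  have KC: "K \<subseteq> E \<inter> cball x0 \<rho>" by (auto simp: K_def)
  have Cconv: "convex (E \<inter> cball x0 \<rho>)" using Eaff by (intro convex_Int affine_imp_convex convex_cball)
  have Cclosed: "closed (E \<inter> cball x0 \<rho>)" using Eclosed by (intro closed_Int closed_cball)
  obtain c where cC: "c \<in> E \<inter> cball x0 \<rho>"
    and ident: "\<And>a. (\<integral>y. indicator K y * (a \<bullet> y) \<partial>M) = measure M K * (a \<bullet> c)"
    using centroid[OF Km KC Cconv Cclosed _ Kpos', of x0 \<rho>] by auto
  have cE: "c \<in> E" and cA: "c \<in> A" and cd: "dist x0 c \<le> \<rho>" using cC EA by auto
  have hc: "hdepth M c = \<alpha>" using const[OF cA] cd \<rho> by (simp add: \<rho>_def)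
  show False
  proof (cases "\<exists>e\<in>E. e \<noteq> c")
    case False
    have E1: "E = {c}"
    proof
      show "E \<subseteq> {c}" using False by blast
      show "{c} \<subseteq> E" using cE by blast
    qed
    have cb: "c \<in> ball x0 \<rho>"
    proof (rule ccontr)
      assume "c \<notin> ball x0 \<rho>"
      hence "K = {}" unfolding K_def E1 by blast
      thus False using Kpos' by simp
    qed
    hence "K = {c}" unfolding K_def E1 by blast
    hence mc: "measure M {c} > 0" using Kpos' by simp
    have ext: "c extreme_point_of depth_region M \<alpha>" using part2[of c \<alpha>] mc hc by simp
    obtain q' where q': "q' \<in> A" "q' \<noteq> c"
    proof (cases "p = c")
      case True
      thus ?thesis using that pq by blast
    next
      case False
      thus ?thesis using that pq by blast
    qed
    define v where "v = q' - c"
    have v0: "v \<noteq> 0" using q' by (simp add: v_def)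
    define \<tau> where "\<tau> = \<rho> / norm v"
    have nt: "norm (\<tau> *\<^sub>R v) = \<rho>" using v0 \<rho> by (simp add: \<tau>_def)
    define a where "a = c + \<tau> *\<^sub>R v"
    define b where "b = c - \<tau> *\<^sub>R v"
    have aA: "a \<in> A"
    proof -
      have "(1 - \<tau>) *\<^sub>R c + \<tau> *\<^sub>R q' \<in> A" using A cA q'(1) by (intro mem_affine) auto
      thus ?thesis by (simp add: a_def v_def algebra_simps)
    qed
    have bA: "b \<in> A"
    proof -
      have "(1 + \<tau>) *\<^sub>R c + (- \<tau>) *\<^sub>R q' \<in> A" using A cA q'(1) by (intro mem_affine) auto
      thus ?thesis by (simp add: b_def v_def algebra_simps)
    qed
    have cb': "dist x0 c < \<rho>" using cb by simp
    have "dist x0 a \<le> dist x0 c + dist c a" by (rule dist_triangle)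
    also have "dist c a = \<rho>" using nt by (simp add: a_def dist_norm)
    finally have ar: "a \<in> ball x0 r" using cb' r by (simp add: \<rho>_def)
    have "dist x0 b \<le> dist x0 c + dist c b" by (rule dist_triangle)
    also have "dist c b = \<rho>" using nt by (simp add: b_def dist_norm)
    finally have br: "b \<in> ball x0 r" using cb' r by (simp add: \<rho>_def)
    have aD: "a \<in> depth_region M \<alpha>" using const[OF aA ar] by (simp add: depth_region_def)
    have bD: "b \<in> depth_region M \<alpha>" using const[OF bA br] by (simp add: depth_region_def)
    have ab: "a \<noteq> b"
    proof
      assume "a = b"
      have "a - b = \<tau> *\<^sub>R v + \<tau> *\<^sub>R v" by (simp add: a_def b_def)
      also have "\<dots> = 2 *\<^sub>R (\<tau> *\<^sub>R v)" by (rule scaleR_2[symmetric])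
      finally have "a - b = 2 *\<^sub>R (\<tau> *\<^sub>R v)" .
      hence "norm (a - b) = 2 * \<rho>" using nt by simp
      thus False using \<open>a = b\<close> \<rho> by simp
    qed
    have "a + b = 2 *\<^sub>R c" by (simp add: a_def b_def scaleR_2)
    hence mid: "c = midpoint a b" by (simp add: midpoint_def)
    have "c \<in> open_segment a b" using ab mid by simp
    thus False using ext aD bD unfolding extreme_point_of_def by blast
  next
    case True
    then obtain e where eE: "e \<in> E" and ec: "e \<noteq> c" by blast
    define S where "S = (\<lambda>x. -c + x) ` E"
    have Ssub: "subspace S" unfolding S_def by (rule affine_diffs_subspace[OF Eaff cE])
    have memS: "w \<in> S \<longleftrightarrow> c + w \<in> E" for w
    proof
      assume "w \<in> S"
      then obtain x where "x \<in> E" "w = -c + x" by (auto simp: S_def)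
      thus "c + w \<in> E" by simp
    next
      assume "c + w \<in> E"
      hence "-c + (c + w) \<in> S" unfolding S_def by (rule imageI)
      thus "w \<in> S" by simp
    qed
    define Sph where "Sph = sphere 0 1 \<inter> S"
    have Sphc: "compact Sph" unfolding Sph_def
      by (intro compact_Int_closed compact_sphere closed_subspace[OF Ssub])
    define w0 where "w0 = (1 / norm (e - c)) *\<^sub>R (-c + e)"
    have w0S: "w0 \<in> S" unfolding w0_def using eE memS[of "-c + e"] Ssub by (intro subspace_scale) auto
    have w0n: "norm w0 = 1" using ec by (simp add: w0_def)
    have KR: "K \<subseteq> cball x0 \<rho>" by (auto simp: K_def)
    have posw: "measure M (K \<inter> {y. (y - c) \<bullet> w < 0}) > 0" if w: "w \<in> Sph" for w
    proof (rule pos_side[OF Km KR Kpos' ident])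
      have "w \<in> S" "norm w = 1" using w by (auto simp: Sph_def)
      moreover have "w \<noteq> 0" using \<open>norm w = 1\<close> by (metis norm_zero zero_neq_one)
      ultimately show "measure M (K \<inter> {y. w \<bullet> y = w \<bullet> c}) = 0"
        using hyp0[OF cE, of w] memS[of w] by blast
    qed
    have KD: "K \<subseteq> ball c (2 * \<rho>)"
    proof
      fix y assume "y \<in> K"
      hence "dist x0 y < \<rho>" by (auto simp: K_def)
      moreover have "dist c y \<le> dist c x0 + dist x0 y" by (rule dist_triangle)
      ultimately show "y \<in> ball c (2 * \<rho>)" using cd by (simp add: dist_commute)
    qed
    obtain \<kappa> where \<kappa>: "\<kappa> > 0" "\<And>w. w \<in> Sph \<Longrightarrow> measure M (K \<inter> {y. (y - c) \<bullet> w < 0}) \<ge> \<kappa>"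
      using unif[OF Km KD Sphc posw] by blast
    have "\<alpha> + \<kappa> \<le> hdepth M c"
    proof (rule hdepth_ge)
      fix u :: 'a assume u: "u \<noteq> 0"
      obtain w l where wl: "w \<in> S" "norm w = 1" "l \<ge> 0" "\<forall>d\<in>S. d \<bullet> u = l * (d \<bullet> w)"
        using decomp[OF Ssub w0S w0n, of u] by blast
      have ww: "w \<bullet> w = 1" using wl(2) by (simp add: norm_eq_1)
      have wu: "w \<bullet> u = l" using wl(4) wl(1) ww by auto
      define t where "t = 2 * \<rho>"
      define s where "s = c - t *\<^sub>R w"
      have "(- t) *\<^sub>R w \<in> S" using Ssub wl(1) by (rule subspace_scale)
      hence sE: "s \<in> E" using memS[of "(-t) *\<^sub>R w"] by (simp add: s_def)
      have "dist x0 s \<le> dist x0 c + dist c s" by (rule dist_triangle)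
      also have "dist c s = t" using wl(2) \<rho> by (simp add: s_def t_def dist_norm)
      finally have sr: "s \<in> ball x0 r" using cd r by (simp add: t_def \<rho>_def)
      have hs: "hdepth M s = \<alpha>" using const[OF _ sr] sE EA by auto
      define P where "P = {y. (y-s) \<bullet> u < 0 \<or> ((y-s) \<bullet> u = 0 \<and> (y-s) \<bullet> w \<le> 0)}"
      define Q where "Q = K \<inter> {y. (y - c) \<bullet> w < 0}"
      have ys: "(y - s) \<bullet> v = (y - c) \<bullet> v + t * (w \<bullet> v)" for y v
        by (simp add: s_def inner_diff_left inner_add_left algebra_simps)
      have PH: "P \<subseteq> {y. y \<bullet> u \<le> c \<bullet> u}"
      proof
        fix y assume "y \<in> P"
        hence "(y - s) \<bullet> u \<le> 0" by (auto simp: P_def)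
        moreover have "t * l \<ge> 0" using wl(3) \<rho> by (simp add: t_def)
        ultimately have "(y - c) \<bullet> u \<le> 0" using ys[of y u, unfolded wu] by linarith
        thus "y \<in> {y. y \<bullet> u \<le> c \<bullet> u}" by (simp add: inner_diff_left)
      qed
      have QH: "Q \<subseteq> {y. y \<bullet> u \<le> c \<bullet> u}" and PQ: "P \<inter> Q = {}"
      proof -
        have *: "y \<in> {y. y \<bullet> u \<le> c \<bullet> u} \<and> y \<notin> P" if y: "y \<in> Q" for y
        proof -
          have yK: "y \<in> K" and yw: "(y - c) \<bullet> w < 0" using y by (auto simp: Q_def)
          have "c + (y - c) \<in> E" using yK by (simp add: K_def)
          hence ycS: "y - c \<in> S" using memS by blast
          have yu: "(y - c) \<bullet> u = l * ((y - c) \<bullet> w)" using wl(4) ycS by auto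
          have "\<bar>(y - c) \<bullet> w\<bar> \<le> norm (y - c) * norm w" by (rule Cauchy_Schwarz_ineq2)
          moreover have "norm (y - c) < t" using KD yK by (auto simp: t_def dist_norm norm_minus_commute)
          ultimately have gt: "(y - c) \<bullet> w + t > 0" using wl(2) by (simp add: abs_le_iff)
          have "(y - c) \<bullet> u \<le> 0" using yu wl(3) yw by (simp add: mult_nonneg_nonpos)
          hence H: "y \<in> {y. y \<bullet> u \<le> c \<bullet> u}" by (simp add: inner_diff_left)
          have "(y - s) \<bullet> u = l * ((y - c) \<bullet> w + t)" using ys[of y u] yu wu by (simp add: algebra_simps)
          moreover have "l * ((y - c) \<bullet> w + t) \<ge> 0" using gt wl(3) by simp
          ultimately have a: "(y - s) \<bullet> u \<ge> 0" by simp
          have b: "(y - s) \<bullet> w > 0" using ys[of y w] ww gt by simp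
          have "y \<notin> P" using a b unfolding P_def by auto
          thus ?thesis using H by blast
        qed
        show "Q \<subseteq> {y. y \<bullet> u \<le> c \<bullet> u}" using * by blast
        show "P \<inter> Q = {}" using * by blast
      qed
      have Pm: "P \<in> sets M" unfolding P_def by (rule lexset_meas)
      have Qm: "Q \<in> sets M" unfolding Q_def using Km open_hs_meas by auto
      have "\<alpha> \<le> measure M P" using lex[OF u, of s w] hs by (simp add: P_def)
      moreover have "\<kappa> \<le> measure M Q" unfolding Q_def using \<kappa>(2)[of w] wl(1,2) by (simp add: Sph_def)
      moreover have "measure M (P \<union> Q) = measure M P + measure M Q"
        using Pm Qm PQ by (intro finite_measure_Union)
      moreover have "measure M (P \<union> Q) \<le> measure M {y. y \<bullet> u \<le> c \<bullet> u}"
        using PH QH by (intro finite_measure_mono hs_meas) auto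
      ultimately show "\<alpha> + \<kappa> \<le> measure M {y. y \<bullet> u \<le> c \<bullet> u}" by linarith
    qed
    thus False using hc \<kappa>(1) by simp
  qed
qed


lemma restr_emeasure: "X \<in> sets M \<Longrightarrow> A \<in> sets M \<Longrightarrow> emeasure (restr_measure M A) X = emeasure M (X \<inter> A)"
  unfolding restr_measure_def
  by (subst emeasure_density) (auto simp: indicator_inter_arith[symmetric] Int_commute)

lemma msupp_sub:
  assumes C: "closed C" and A: "A \<in> sets M" and z: "emeasure M ((UNIV - C) \<inter> A) = 0"
  shows "msupp (restr_measure M A) \<subseteq> C"
proof -
  have sets: "sets (restr_measure M A) = sets M" by (simp add: restr_measure_def)
  have space: "space (restr_measure M A) = UNIV" by (simp add: restr_measure_def sp)
  have Cm: "C \<in> sets M" using C by (rule closed_meas)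
  have Cc: "UNIV - C \<in> sets M" using C by (intro open_meas) (simp add: open_Diff)
  have "emeasure (restr_measure M A) (UNIV - C) = emeasure M ((UNIV - C) \<inter> A)"
    by (rule restr_emeasure[OF Cc A])
  hence "emeasure (restr_measure M A) (space (restr_measure M A) - C) = 0"
    using z by (simp only: space)
  thus ?thesis unfolding msupp_def using C Cm sets by blast
qed

lemma part1:
  assumes A: "affine A" and pq: "p \<in> A" "q \<in> A" "p \<noteq> q"
  shows "msupp (restr_measure M A) \<subseteq>
          (subtopology euclidean A) closure_of
            (\<Union>\<alpha>\<in>{0..}. (subtopology euclidean A) frontier_of (depth_region M \<alpha> \<inter> A))"
    (is "_ \<subseteq> ?X closure_of ?U")
proof
  fix x0 assume x0: "x0 \<in> msupp (restr_measure M A)"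
  have Acl: "closed A" using A by (rule affine_closed)
  have Am: "A \<in> sets M" using Acl by (rule closed_meas)
  have e: "(UNIV - A) \<inter> A = {}" by blast
  have "msupp (restr_measure M A) \<subseteq> A" by (rule msupp_sub[OF Acl Am]) (simp only: e emeasure_empty)
  hence x0A: "x0 \<in> A" using x0 by auto
  show "x0 \<in> ?X closure_of ?U"
  proof (rule ccontr)
    assume "x0 \<notin> ?X closure_of ?U"
    then obtain T where T: "x0 \<in> T" "openin ?X T" "T \<inter> ?U = {}"
      using x0A by (auto simp: in_closure_of)
    from T(2) obtain Op where Op1: "openin euclidean Op" and Op2: "T = Op \<inter> A"
      unfolding openin_subtopology by blast
    have O: "open Op" "T = Op \<inter> A" using Op1 Op2 by (simp_all only: open_openin)
    have "x0 \<in> Op" using T(1) O(2) by blast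
    then obtain r where r: "r > 0" "ball x0 r \<subseteq> Op" using open_contains_ball_eq[OF O(1)] by blast
    define V where "V = A \<inter> ball x0 r"
    have VT: "V \<subseteq> T" using O(2) r(2) unfolding V_def by blast
    have VU: "V \<inter> ?U = {}" using T(3) VT by blast
    have "convex V" unfolding V_def by (intro convex_Int affine_imp_convex[OF A] convex_ball)
    hence "connected V" by (rule convex_connected)
    moreover have "V \<subseteq> A" by (simp add: V_def)
    ultimately have conn: "connectedin ?X V" by (simp add: connectedin_subtopology)
    have ge: "hdepth M p1 \<le> hdepth M p2" if p1: "p1 \<in> V" and p2: "p2 \<in> V" for p1 p2
    proof (rule ccontr)
      assume nle: "\<not> ?thesis"
      define S' where "S' = depth_region M (hdepth M p1) \<inter> A"
      have "V \<inter> S' \<noteq> {}" using p1 by (auto simp: S'_def depth_region_def V_def)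
      moreover have "V - S' \<noteq> {}" using p2 nle by (auto simp: S'_def depth_region_def)
      ultimately have "V \<inter> ?X frontier_of S' \<noteq> {}" by (rule connectedin_Int_frontier_of[OF conn])
      moreover have "?X frontier_of S' \<subseteq> ?U" unfolding S'_def using hdepth_nonneg[of p1] by auto
      ultimately show False using VU by auto
    qed
    have const: "hdepth M y = hdepth M x0" if "y \<in> A" "y \<in> ball x0 r" for y
    proof -
      have "y \<in> V" "x0 \<in> V" using that x0A r(1) by (auto simp: V_def)
      thus ?thesis using ge by (meson order_antisym)
    qed
    have z: "measure M (A \<inter> ball x0 (r/4)) = 0" by (rule core[OF A pq x0A r(1) const])
    have "msupp (restr_measure M A) \<subseteq> UNIV - ball x0 (r/4)"
    proof (rule msupp_sub[OF _ Am])
      show "closed (UNIV - ball x0 (r / 4))" by (simp add: closed_Diff)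
      have "(UNIV - (UNIV - ball x0 (r / 4))) \<inter> A = A \<inter> ball x0 (r/4)" by auto
      thus "emeasure M ((UNIV - (UNIV - ball x0 (r / 4))) \<inter> A) = 0"
        using z by (simp add: emeasure_eq_measure)
    qed
    thus False using x0 r(1) by auto
  qed
qed

end

theorem theorem1:
  fixes M :: "'a::euclidean_space measure"
  assumes borel: "sets M = sets borel"
    and fin: "finite_measure M"
  shows
    "(\<forall>A. affine A \<and> (\<exists>p\<in>A. \<exists>q\<in>A. p \<noteq> q) \<longrightarrow>
        msupp (restr_measure M A) \<subseteq>
          (subtopology euclidean A) closure_of
            (\<Union>\<alpha>\<in>{0..}. (subtopology euclidean A) frontier_of (depth_region M \<alpha> \<inter> A)))
   \<and> msupp M \<subseteq> closure (\<Union>\<alpha>\<in>{0..}. frontier (depth_region M \<alpha>))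
   \<and> (\<forall>x \<alpha> \<beta>. measure M {x} > 0 \<and> hdepth M x = \<alpha> \<and> \<alpha> - measure M {x} < \<beta> \<and> \<beta> \<le> \<alpha>
        \<longrightarrow> x extreme_point_of (depth_region M \<beta>))
   \<and> (\<forall>x y z \<alpha>. hdepth M x = \<alpha> \<and> z \<in> depth_region_strict M \<alpha> \<and> x \<in> open_segment y z
        \<longrightarrow> hdepth M y \<le> hdepth M x - measure M {x})"
proof -
  interpret tk M using fin borel by (simp add: tk_def tk_axioms_def)
  have P1: "\<forall>A. affine A \<and> (\<exists>p\<in>A. \<exists>q\<in>A. p \<noteq> q) \<longrightarrow>
        msupp (restr_measure M A) \<subseteq>
          (subtopology euclidean A) closure_of
            (\<Union>\<alpha>\<in>{0..}. (subtopology euclidean A) frontier_of (depth_region M \<alpha> \<inter> A))"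
    using part1 by blast
  have P1': "msupp M \<subseteq> closure (\<Union>\<alpha>\<in>{0..}. frontier (depth_region M \<alpha>))"
  proof -
    obtain u :: 'a where u: "u \<noteq> 0" using ex_nonzero by blast
    have "msupp (restr_measure M UNIV) \<subseteq>
          (subtopology euclidean UNIV) closure_of
            (\<Union>\<alpha>\<in>{0..}. (subtopology euclidean UNIV) frontier_of (depth_region M \<alpha> \<inter> UNIV))"
      using P1[rule_format, of UNIV] u affine_UNIV by blast
    moreover have "restr_measure M UNIV = M" by (simp add: restr_measure_def density_1)
    ultimately show ?thesis by simp
  qed
  have P2: "\<forall>x \<alpha> \<beta>. measure M {x} > 0 \<and> hdepth M x = \<alpha> \<and> \<alpha> - measure M {x} < \<beta> \<and> \<beta> \<le> \<alpha>
        \<longrightarrow> x extreme_point_of (depth_region M \<beta>)"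
    using part2 by blast
  have P3: "\<forall>x y z \<alpha>. hdepth M x = \<alpha> \<and> z \<in> depth_region_strict M \<alpha> \<and> x \<in> open_segment y z
        \<longrightarrow> hdepth M y \<le> hdepth M x - measure M {x}"
    using part3 by blast
  show ?thesis using P1 P1' P2 P3 by blast
qed

end
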